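(* Let $j^1,j^2$ be twice differentiable functions of $(\rho_1,\rho_2)$ near a point, and at that point write $j^\alpha_\beta=\partial j^\alpha/\partial\rho_\beta$, $j^\alpha_{\beta\gamma}=\partial^2 j^\alpha/\partial\rho_\beta\partial\rho_\gamma$. Assume $j^1_2\,j^2_1\neq0$ and $\Delta^2:=(j^1_1-j^2_2)^2+4j^1_2j^2_1>0$, $\Delta>0$. Let $\mathbf{R}$ be any invertible $2\times2$ matrix with $\mathbf{R}\mathbf{J}\mathbf{R}^{-1}=\mathrm{diag}(v_+,v_-)$, $v_\pm=\tfrac12(j^1_1+j^2_2\pm\Delta)$, and let $\mathbf{G}^1,\mathbf{G}^2$ be the associated mode coupling matrices. Then: (a) $G^1_{11}=G^2_{22}=0$ if and only if $$j^2_1(2j^1_{12}+j^2_{22})+j^1_2j^2_{11}-j^1_{11}(j^2_2-j^1_1)=0\quad\text{and}\quad j^1_2(2j^2_{12}+j^1_{11})+j^2_1j^1_{22}+j^2_{22}(j^2_2-j^1_1)=0.$$ (b) Assume the two conditions in (a) hold, and set $P:=(j^2_1)^2j^1_{22}+j^1_2j^2_1j^1_{11}$ and $Q:=j^2_1j^2_{22}+j^1_2j^2_{11}$. Then - $G^1_{22}=0$ if and only if $P=\tfrac12(j^1_1-j^2_2-\Delta)\,Q$; - $G^2_{11}=0$ if and only if $P=\tfrac12(j^1_1-j^2_2+\Delta)\,Q$. Consequently: $G^1_{22}=G^2_{11}=0$ iff $j^2_1j^1_{22}+j^1_2j^1_{11}=0$ and $j^2_1j^2_{22}+j^1_2j^2_{11}=0$;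 $G^1_{22}=0\neq G^2_{11}$ iff $P=\tfrac12(j^1_1-j^2_2-\Delta)Q$ and $Q\neq0$; $G^1_{22}\neq0=G^2_{11}$ iff $P=\tfrac12(j^1_1-j^2_2+\Delta)Q$ and $Q\neq0$; and $G^1_{22}\neq0\neq G^2_{11}$ iff $P\neq\tfrac12(j^1_1-j^2_2\pm\Delta)Q$ for both signs.
   Context: $\mathbf{J}=\begin{pmatrix} j^1_1 & j^1_2\\ j^2_1 & j^2_2\end{pmatrix}$ is the current Jacobian, $\mathbf{H}^\lambda$ ($\lambda=1,2$) is the Hessian matrix with entries $H^\lambda_{\beta\gamma}=j^\lambda_{\beta\gamma}$. For an invertible diagonalizer $\mathbf{R}$ (its first row is a left eigenvector of $\mathbf{J}$ for $v_+$, its second row a left eigenvector for $v_-$), the mode coupling matrices are $\mathbf{G}^\alpha=\tfrac12\sum_{\lambda=1}^2R_{\alpha\lambda}(\mathbf{R}^{-1})^T\mathbf{H}^\lambda\mathbf{R}^{-1}$, $\alpha=1,2$, with entries $G^\alpha_{\beta\gamma}$; whether a given entry vanishes does not depend on the normalization of the rows of $\mathbf{R}$. (Interpretation in mode coupling theory, not needed for the claim: the case $G^1_{11}=G^2_{22}=0$ is the non-KPZ case; within it, $G^1_{22}=G^2_{11}=0$ corresponds to two diffusive modes, exactly one vanishing corresponds to one diffusive and one $z=3/2$ Lévy mode, and both nonzero to two golden-mean Lévy modes.) *)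

theory Defs
  imports "HOL-Analysis.Analysis"
begin

text \<open>2x2 real matrices are indexed by the two-element type 2, whose elements
  are 1 and 2 (first and second row/column).  The Jacobian J has entries
  J $ a $ b = j^a_b, and H l is the Hessian of j^l, H l $ b $ c = j^l_bc.\<close>

definition diag2 :: "real \<Rightarrow> real \<Rightarrow> real^2^2" where
  "diag2 a b = (\<chi> i j. if i = j then (if i = 1 then a else b) else 0)"

definition mode_coupling :: "real^2^2 \<Rightarrow> (2 \<Rightarrow> real^2^2) \<Rightarrow> 2 \<Rightarrow> real^2^2" where
  "mode_coupling R H a =
     (\<Sum>l\<in>UNIV. (R $ a $ l / 2) *\<^sub>R (transpose (matrix_inv R) ** H l ** matrix_inv R))"

end

theory Submission
  imports Defs
begin

lemma idE: fixes a b c d m p h111 h112 h122 h211 h212 h222 :: real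
  assumes "p*m = -b*c" "p+m = d-a"
  shows "c*(h111*m^2 + 2*h112*m*(-c) + h122*c^2) + p*(h211*m^2 + 2*h212*m*(-c) + h222*c^2)
   = c*(c*(b*(2*h212+h111) + c*h122 + h222*(d-a)) - m*(c*(2*h112+h222) + b*h211 - h111*(d-a)))"
  using assms by algebra

lemma idF: fixes a b c d m p h111 h112 h122 h211 h212 h222 :: real
  assumes "p*m = -b*c" "p+m = d-a"
  shows "b*(c*(h111*p^2 + 2*h112*p*(-c) + h122*c^2) + p*(h211*p^2 + 2*h212*p*(-c) + h222*c^2))
   = p*(p-m)*((c^2*h122 + b*c*h111) + p*(c*h222+b*h211)) - b*c*p*(c*(2*h112+h222) + b*h211 - h111*(d-a))
     - c*p^2*(b*(2*h212+h111) + c*h122 + h222*(d-a))"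
  using assms by algebra

definition qf :: "real \<Rightarrow> real \<Rightarrow> real \<Rightarrow> real \<Rightarrow> real \<Rightarrow> real" where
  "qf h11 h12 h22 x y = h11*x^2 + 2*h12*x*y + h22*y^2"

lemma core:
  fixes a b c d h111 h112 h122 h211 h212 h222 ya yb yc yd za zb zc zd \<Delta> :: real
  assumes bc: "b*c \<noteq> 0"
    and dpos: "\<Delta> > 0" and dsq: "\<Delta>^2 = (a-d)^2 + 4*b*c"
    and e1: "ya*a + yb*c = (a+d+\<Delta>)/2*ya"
    and e3: "yc*a + yd*c = (a+d-\<Delta>)/2*yc"
    and i1: "ya*za + yb*zc = 1" and i2: "ya*zb + yb*zd = 0"
    and i3: "yc*za + yd*zc = 0" and i4: "yc*zb + yd*zd = 1"
    and p_def: "p = (d - a + \<Delta>)/2" and m_def: "m = (d - a - \<Delta>)/2"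
    and A_def: "A = c*(2*h112+h222) + b*h211 - h111*(d-a)"
    and B_def: "B = b*(2*h212+h111) + c*h122 + h222*(d-a)"
    and P_def: "P = c^2*h122 + b*c*h111" and Q_def: "Q = c*h222+b*h211"
  shows "ya \<noteq> 0" "yc \<noteq> 0" "zc \<noteq> 0" "zd \<noteq> 0" "p \<noteq> 0" "m \<noteq> 0" "p - m = \<Delta>"
    "(ya*qf h111 h112 h122 za zc + yb*qf h211 h212 h222 za zc)/2 = ya*zc^2/(2*c^2) * (c*B - m*A)"
    "(yc*qf h111 h112 h122 zb zd + yd*qf h211 h212 h222 zb zd)/2 = yc*zd^2/(2*c^2) * (c*B - p*A)"
    "(ya*qf h111 h112 h122 zb zd + yb*qf h211 h212 h222 zb zd)/2
       = ya*zd^2/(2*b*c^3) * (p*(p-m)*(P+p*Q) - b*c*p*A - c*p^2*B)"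
    "(yc*qf h111 h112 h122 za zc + yd*qf h211 h212 h222 za zc)/2
       = yc*zc^2/(2*b*c^3) * (m*(m-p)*(P+m*Q) - b*c*m*A - c*m^2*B)"
proof -
  have b0: "b \<noteq> 0" and c0: "c \<noteq> 0" using bc by auto
  have pm: "p*m = -b*c" unfolding p_def m_def using dsq
    by (simp add: field_simps power2_eq_square)
  have ppm: "p+m = d-a" using p_def m_def by (simp add: field_simps)
  show pmD: "p - m = \<Delta>" using p_def m_def by (simp add: field_simps)
  show p0: "p \<noteq> 0" using pm bc by auto
  show m0: "m \<noteq> 0" using pm bc by auto
  have yb: "yb = p*ya/c" using e1 c0 unfolding p_def by (simp add: field_simps)
  have yd: "yd = m*yc/c" using e3 c0 unfolding m_def by (simp add: field_simps)
  show ya: "ya \<noteq> 0" using i1 yb by auto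
  show yc: "yc \<noteq> 0" using i4 yd by auto
  have za: "za = -m*zc/c"
  proof -
    have "yc*(za + m*zc/c) = 0" using i3 yd by (simp add: algebra_simps)
    then have h: "za + m*zc/c = 0" using yc by simp
    have "za = za + m*zc/c - m*zc/c" by simp
    also have "\<dots> = -m*zc/c" using h by simp
    finally show ?thesis .
  qed
  have zb: "zb = -p*zd/c"
  proof -
    have "ya*(zb + p*zd/c) = 0" using i2 yb by (simp add: algebra_simps)
    then have h: "zb + p*zd/c = 0" using ya by simp
    have "zb = zb + p*zd/c - p*zd/c" by simp
    also have "\<dots> = -p*zd/c" using h by simp
    finally show ?thesis .
  qed
  show "zc \<noteq> 0" using i1 za by auto
  show "zd \<noteq> 0" using i4 zb by auto
  have E1: "c*(h111*m^2 + 2*h112*m*(-c) + h122*c^2) + p*(h211*m^2 + 2*h212*m*(-c) + h222*c^2) = c*(c*B - m*A)"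
    unfolding A_def B_def by (rule idE[OF pm ppm])
  have E2: "c*(h111*p^2 + 2*h112*p*(-c) + h122*c^2) + m*(h211*p^2 + 2*h212*p*(-c) + h222*c^2) = c*(c*B - p*A)"
    unfolding A_def B_def by (rule idE) (use pm ppm in \<open>auto simp: algebra_simps\<close>)
  have F1: "b*(c*(h111*p^2 + 2*h112*p*(-c) + h122*c^2) + p*(h211*p^2 + 2*h212*p*(-c) + h222*c^2))
      = p*(p-m)*(P+p*Q) - b*c*p*A - c*p^2*B"
    unfolding A_def B_def P_def Q_def by (rule idF[OF pm ppm])
  have F2: "b*(c*(h111*m^2 + 2*h112*m*(-c) + h122*c^2) + m*(h211*m^2 + 2*h212*m*(-c) + h222*c^2))
      = m*(m-p)*(P+m*Q) - b*c*m*A - c*m^2*B"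
    unfolding A_def B_def P_def Q_def by (rule idF) (use pm ppm in \<open>auto simp: algebra_simps\<close>)
  have G1: "(ya*qf h111 h112 h122 za zc + yb*qf h211 h212 h222 za zc)/2
     = (zc/c)^2*(ya/c)*(c*(h111*m^2 + 2*h112*m*(-c) + h122*c^2) + p*(h211*m^2 + 2*h212*m*(-c) + h222*c^2))/2"
    unfolding qf_def za yb using c0 by (simp add: field_simps power2_eq_square)
  show "(ya*qf h111 h112 h122 za zc + yb*qf h211 h212 h222 za zc)/2 = ya*zc^2/(2*c^2) * (c*B - m*A)"
    unfolding G1 E1 using c0 by (simp add: field_simps power2_eq_square)
  have G2: "(yc*qf h111 h112 h122 zb zd + yd*qf h211 h212 h222 zb zd)/2
     = (zd/c)^2*(yc/c)*(c*(h111*p^2 + 2*h112*p*(-c) + h122*c^2) + m*(h211*p^2 + 2*h212*p*(-c) + h222*c^2))/2"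
    unfolding qf_def zb yd using c0 by (simp add: field_simps power2_eq_square)
  show "(yc*qf h111 h112 h122 zb zd + yd*qf h211 h212 h222 zb zd)/2 = yc*zd^2/(2*c^2) * (c*B - p*A)"
    unfolding G2 E2 using c0 by (simp add: field_simps power2_eq_square)
  have G3: "(ya*qf h111 h112 h122 zb zd + yb*qf h211 h212 h222 zb zd)/2
     = (zd/c)^2*(ya/c)*(b*(c*(h111*p^2 + 2*h112*p*(-c) + h122*c^2) + p*(h211*p^2 + 2*h212*p*(-c) + h222*c^2)))/(2*b)"
    unfolding qf_def zb yb using c0 b0 by (simp add: field_simps power2_eq_square)
  show "(ya*qf h111 h112 h122 zb zd + yb*qf h211 h212 h222 zb zd)/2
       = ya*zd^2/(2*b*c^3) * (p*(p-m)*(P+p*Q) - b*c*p*A - c*p^2*B)"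
    unfolding G3 F1 using c0 b0 by (simp add: field_simps power2_eq_square power3_eq_cube)
  have G4: "(yc*qf h111 h112 h122 za zc + yd*qf h211 h212 h222 za zc)/2
     = (zc/c)^2*(yc/c)*(b*(c*(h111*m^2 + 2*h112*m*(-c) + h122*c^2) + m*(h211*m^2 + 2*h212*m*(-c) + h222*c^2)))/(2*b)"
    unfolding qf_def za yd using c0 b0 by (simp add: field_simps power2_eq_square)
  show "(yc*qf h111 h112 h122 za zc + yd*qf h211 h212 h222 za zc)/2
       = yc*zc^2/(2*b*c^3) * (m*(m-p)*(P+m*Q) - b*c*m*A - c*m^2*B)"
    unfolding G4 F2 using c0 b0 by (simp add: field_simps power2_eq_square power3_eq_cube)
qed

lemma final:
  fixes A B P Q X p m b c k1 k2 k3 k4 g111 g222 g122 g211 T1 T2 :: real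
  assumes nz: "k1 \<noteq> 0" "k2 \<noteq> 0" "k3 \<noteq> 0" "k4 \<noteq> 0" "p \<noteq> m" "p \<noteq> 0" "m \<noteq> 0" "b \<noteq> 0" "c \<noteq> 0"
    and g1: "g111 = k1*(c*B - m*A)" and g2: "g222 = k2*(c*B - p*A)"
    and g3: "g122 = k3*(p*(p-m)*(P+p*Q) - b*c*p*A - c*p^2*B)"
    and g4: "g211 = k4*(m*(m-p)*(P+m*Q) - b*c*m*A - c*m^2*B)"
    and PX: "P = c*X" and T1: "T1 = -p" and T2: "T2 = -m"
  shows "((g111 = 0 \<and> g222 = 0) \<longleftrightarrow> (A = 0 \<and> B = 0)) \<and>
    ((A = 0 \<and> B = 0) \<longrightarrow>
      (g122 = 0 \<longleftrightarrow> P = T1 * Q) \<and>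
      (g211 = 0 \<longleftrightarrow> P = T2 * Q) \<and>
      ((g122 = 0 \<and> g211 = 0) \<longleftrightarrow> (X = 0 \<and> Q = 0)) \<and>
      ((g122 = 0 \<and> g211 \<noteq> 0) \<longleftrightarrow> (P = T1 * Q \<and> Q \<noteq> 0)) \<and>
      ((g122 \<noteq> 0 \<and> g211 = 0) \<longleftrightarrow> (P = T2 * Q \<and> Q \<noteq> 0)) \<and>
      ((g122 \<noteq> 0 \<and> g211 \<noteq> 0) \<longleftrightarrow> (P \<noteq> T1 * Q \<and> P \<noteq> T2 * Q)))"
proof -
  have pm0: "p - m \<noteq> 0" "m - p \<noteq> 0" using nz by auto
  have a: "(g111 = 0 \<and> g222 = 0) \<longleftrightarrow> (A = 0 \<and> B = 0)"
  proof
    assume h: "g111 = 0 \<and> g222 = 0"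
    then have "c*B = m*A" "c*B = p*A" using g1 g2 nz by auto
    then have "(p - m)*A = 0" by (simp add: algebra_simps) (metis mult.commute)
    then have "A = 0" using pm0 by simp
    then show "A = 0 \<and> B = 0" using \<open>c*B = m*A\<close> nz by simp
  qed (simp add: g1 g2)
  have b: "A = 0 \<and> B = 0 \<Longrightarrow> (g122 = 0 \<longleftrightarrow> P = T1 * Q) \<and> (g211 = 0 \<longleftrightarrow> P = T2 * Q)"
  proof -
    assume h: "A = 0 \<and> B = 0"
    define K3 where "K3 = k3*(p*(p-m))"
    define K4 where "K4 = k4*(m*(m-p))"
    have K: "g122 = K3*(P+p*Q)" "g211 = K4*(P+m*Q)" using g3 g4 h unfolding K3_def K4_def by simp_all
    have K': "K3 \<noteq> 0" "K4 \<noteq> 0" unfolding K3_def K4_def using nz pm0 by simp_all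
    have "g122 = 0 \<longleftrightarrow> P + p*Q = 0" using K K' by simp
    also have "\<dots> \<longleftrightarrow> P = T1*Q" unfolding T1 by (auto simp: algebra_simps)
    finally have 1: "g122 = 0 \<longleftrightarrow> P = T1*Q" .
    have "g211 = 0 \<longleftrightarrow> P + m*Q = 0" using K K' by simp
    also have "\<dots> \<longleftrightarrow> P = T2*Q" unfolding T2 by (auto simp: algebra_simps)
    finally show ?thesis using 1 by simp
  qed
  have c: "(P = T1 * Q \<and> P = T2 * Q) \<longleftrightarrow> (X = 0 \<and> Q = 0)"
  proof
    assume h: "P = T1 * Q \<and> P = T2 * Q"
    have "(p - m) * Q = T2 * Q - T1 * Q" unfolding T1 T2 by (simp add: algebra_simps)
    also have "\<dots> = 0" using h by linarith
    finally have "(p - m) * Q = 0" .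
    then have "Q = 0" using pm0 by simp
    then show "X = 0 \<and> Q = 0" using h PX nz by simp
  qed (simp add: PX)
  have d1: "P = T1 * Q \<Longrightarrow> (P = T2 * Q \<longleftrightarrow> Q = 0)" using c by auto
  have d2: "P = T2 * Q \<Longrightarrow> (P = T1 * Q \<longleftrightarrow> Q = 0)" using c by auto
  show ?thesis
  proof (intro conjI impI)
    show "(g111 = 0 \<and> g222 = 0) \<longleftrightarrow> (A = 0 \<and> B = 0)" by (rule a)
    assume AB: "A = 0 \<and> B = 0"
    have b1: "g122 = 0 \<longleftrightarrow> P = T1 * Q" and b2: "g211 = 0 \<longleftrightarrow> P = T2 * Q" using b[OF AB] by auto
    show "g122 = 0 \<longleftrightarrow> P = T1 * Q" by (rule b1)
    show "g211 = 0 \<longleftrightarrow> P = T2 * Q" by (rule b2)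
    show "(g122 = 0 \<and> g211 = 0) \<longleftrightarrow> (X = 0 \<and> Q = 0)" unfolding b1 b2 by (rule c)
    show "(g122 = 0 \<and> g211 \<noteq> 0) \<longleftrightarrow> (P = T1 * Q \<and> Q \<noteq> 0)" unfolding b1 b2 using d1 by blast
    show "(g122 \<noteq> 0 \<and> g211 = 0) \<longleftrightarrow> (P = T2 * Q \<and> Q \<noteq> 0)" unfolding b1 b2 using d2 by blast
    show "(g122 \<noteq> 0 \<and> g211 \<noteq> 0) \<longleftrightarrow> (P \<noteq> T1 * Q \<and> P \<noteq> T2 * Q)" unfolding b1 b2 by blast
  qed
qed

theorem theorem3:
  fixes J R :: "real^2^2" and H :: "2 \<Rightarrow> real^2^2"
  assumes Hsym: "\<And>l b c. H l $ b $ c = H l $ c $ b"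
    and offdiag: "J $ 1 $ 2 * J $ 2 $ 1 \<noteq> 0"
    and disc: "(J $ 1 $ 1 - J $ 2 $ 2)^2 + 4 * J $ 1 $ 2 * J $ 2 $ 1 > 0"
    and Delta_def: "\<Delta> = sqrt ((J $ 1 $ 1 - J $ 2 $ 2)^2 + 4 * J $ 1 $ 2 * J $ 2 $ 1)"
    and vp_def: "vp = (J $ 1 $ 1 + J $ 2 $ 2 + \<Delta>) / 2"
    and vm_def: "vm = (J $ 1 $ 1 + J $ 2 $ 2 - \<Delta>) / 2"
    and Rinv: "invertible R"
    and Rdiag: "R ** J ** matrix_inv R = diag2 vp vm"
    and G_def: "G = mode_coupling R H"
    and P_def: "P = (J $ 2 $ 1)^2 * H 1 $ 2 $ 2 + J $ 1 $ 2 * J $ 2 $ 1 * H 1 $ 1 $ 1"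
    and Q_def: "Q = J $ 2 $ 1 * H 2 $ 2 $ 2 + J $ 1 $ 2 * H 2 $ 1 $ 1"
  shows
   "((G 1 $ 1 $ 1 = 0 \<and> G 2 $ 2 $ 2 = 0) \<longleftrightarrow>
       (J $ 2 $ 1 * (2 * H 1 $ 1 $ 2 + H 2 $ 2 $ 2) + J $ 1 $ 2 * H 2 $ 1 $ 1
          - H 1 $ 1 $ 1 * (J $ 2 $ 2 - J $ 1 $ 1) = 0 \<and>
        J $ 1 $ 2 * (2 * H 2 $ 1 $ 2 + H 1 $ 1 $ 1) + J $ 2 $ 1 * H 1 $ 2 $ 2
          + H 2 $ 2 $ 2 * (J $ 2 $ 2 - J $ 1 $ 1) = 0))
    \<and>
    ((J $ 2 $ 1 * (2 * H 1 $ 1 $ 2 + H 2 $ 2 $ 2) + J $ 1 $ 2 * H 2 $ 1 $ 1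
          - H 1 $ 1 $ 1 * (J $ 2 $ 2 - J $ 1 $ 1) = 0 \<and>
      J $ 1 $ 2 * (2 * H 2 $ 1 $ 2 + H 1 $ 1 $ 1) + J $ 2 $ 1 * H 1 $ 2 $ 2
          + H 2 $ 2 $ 2 * (J $ 2 $ 2 - J $ 1 $ 1) = 0)
     \<longrightarrow>
      (G 1 $ 2 $ 2 = 0 \<longleftrightarrow> P = (J $ 1 $ 1 - J $ 2 $ 2 - \<Delta>) / 2 * Q) \<and>
      (G 2 $ 1 $ 1 = 0 \<longleftrightarrow> P = (J $ 1 $ 1 - J $ 2 $ 2 + \<Delta>) / 2 * Q) \<and>
      ((G 1 $ 2 $ 2 = 0 \<and> G 2 $ 1 $ 1 = 0) \<longleftrightarrow>
         (J $ 2 $ 1 * H 1 $ 2 $ 2 + J $ 1 $ 2 * H 1 $ 1 $ 1 = 0 \<and>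
          J $ 2 $ 1 * H 2 $ 2 $ 2 + J $ 1 $ 2 * H 2 $ 1 $ 1 = 0)) \<and>
      ((G 1 $ 2 $ 2 = 0 \<and> G 2 $ 1 $ 1 \<noteq> 0) \<longleftrightarrow>
         (P = (J $ 1 $ 1 - J $ 2 $ 2 - \<Delta>) / 2 * Q \<and> Q \<noteq> 0)) \<and>
      ((G 1 $ 2 $ 2 \<noteq> 0 \<and> G 2 $ 1 $ 1 = 0) \<longleftrightarrow>
         (P = (J $ 1 $ 1 - J $ 2 $ 2 + \<Delta>) / 2 * Q \<and> Q \<noteq> 0)) \<and>
      ((G 1 $ 2 $ 2 \<noteq> 0 \<and> G 2 $ 1 $ 1 \<noteq> 0) \<longleftrightarrow>
         (P \<noteq> (J $ 1 $ 1 - J $ 2 $ 2 - \<Delta>) / 2 * Q \<and>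
          P \<noteq> (J $ 1 $ 1 - J $ 2 $ 2 + \<Delta>) / 2 * Q)))"
proof -
  define Ri where "Ri = matrix_inv R"
  have inv: "R ** Ri = mat 1 \<and> Ri ** R = mat 1"
    using Rinv unfolding invertible_def matrix_inv_def Ri_def by (rule someI_ex)
  have RJ: "R ** J = diag2 vp vm ** R"
  proof -
    have "R ** J ** Ri ** R = R ** J ** (Ri ** R)" by (simp only: matrix_mul_assoc)
    then have "R ** J = (R ** J ** Ri) ** R" using inv by (simp add: matrix_mul_rid)
    then show ?thesis using Rdiag unfolding Ri_def by simp
  qed
  have e1: "R$1$1 * J$1$1 + R$1$2 * J$2$1 = (J$1$1 + J$2$2 + \<Delta>)/2 * R$1$1"
    using arg_cong[of _ _ "\<lambda>M. M$1$1", OF RJ]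
    by (simp add: matrix_matrix_mult_def sum_2 diag2_def vp_def)
  have e3: "R$2$1 * J$1$1 + R$2$2 * J$2$1 = (J$1$1 + J$2$2 - \<Delta>)/2 * R$2$1"
    using arg_cong[of _ _ "\<lambda>M. M$2$1", OF RJ]
    by (simp add: matrix_matrix_mult_def sum_2 diag2_def vm_def)
  have RR: "R ** Ri = mat 1" using inv by simp
  have i1: "R$1$1 * Ri$1$1 + R$1$2 * Ri$2$1 = 1"
    using arg_cong[of _ _ "\<lambda>M. M$1$1", OF RR] by (simp add: matrix_matrix_mult_def sum_2 mat_def)
  have i2: "R$1$1 * Ri$1$2 + R$1$2 * Ri$2$2 = 0"
    using arg_cong[of _ _ "\<lambda>M. M$1$2", OF RR] by (simp add: matrix_matrix_mult_def sum_2 mat_def)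
  have i3: "R$2$1 * Ri$1$1 + R$2$2 * Ri$2$1 = 0"
    using arg_cong[of _ _ "\<lambda>M. M$2$1", OF RR] by (simp add: matrix_matrix_mult_def sum_2 mat_def)
  have i4: "R$2$1 * Ri$1$2 + R$2$2 * Ri$2$2 = 1"
    using arg_cong[of _ _ "\<lambda>M. M$2$2", OF RR] by (simp add: matrix_matrix_mult_def sum_2 mat_def)
  have hs: "\<And>l. H l $ 2 $ 1 = H l $ 1 $ 2" using Hsym by auto
  have Gx: "\<And>a b. G a $ b $ b = (R$a$1 * qf (H 1$1$1) (H 1$1$2) (H 1$2$2) (Ri$1$b) (Ri$2$b)
       + R$a$2 * qf (H 2$1$1) (H 2$1$2) (H 2$2$2) (Ri$1$b) (Ri$2$b))/2"
    unfolding G_def mode_coupling_def qf_def Ri_def[symmetric]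
    by (simp add: matrix_matrix_mult_def transpose_def sum_2 hs sum_component power2_eq_square algebra_simps)
  have dsq0: "(J$1$1 - J$2$2)^2 + 4 * J$1$2 * J$2$1 \<ge> 0" using disc by simp
  have dpos: "\<Delta> > 0" using disc Delta_def by simp
  have dsq: "\<Delta>^2 = (J$1$1 - J$2$2)^2 + 4 * J$1$2 * J$2$1" using dsq0 Delta_def by simp
  define p where "p = (J$2$2 - J$1$1 + \<Delta>)/2"
  define m where "m = (J$2$2 - J$1$1 - \<Delta>)/2"
  note C = core[OF offdiag dpos dsq e1 e3 i1 i2 i3 i4 p_def m_def refl refl P_def Q_def]
  have b0: "J$1$2 \<noteq> 0" and c0: "J$2$1 \<noteq> 0" using offdiag by auto
  have PX: "P = J$2$1 * (J$2$1 * H 1$2$2 + J$1$2 * H 1$1$1)" unfolding P_def by (simp add: algebra_simps power2_eq_square)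
  have T1: "(J$1$1 - J$2$2 - \<Delta>)/2 = -p" using p_def by (simp add: field_simps)
  have T2: "(J$1$1 - J$2$2 + \<Delta>)/2 = -m" using m_def by (simp add: field_simps)
  have pm: "p \<noteq> m" using C(7) dpos by auto
  note F = final[OF _ _ _ _ pm C(5) C(6) b0 c0 Gx[of 1 1, unfolded C(8)] Gx[of 2 2, unfolded C(9)]
      Gx[of 1 2, unfolded C(10)] Gx[of 2 1, unfolded C(11)] PX T1 T2]
  have k1: "R $ 1 $ 1 * (Ri $ 2 $ 1)^2 / (2 * (J $ 2 $ 1)^2) \<noteq> 0" using C(1,3) c0 by simp
  have k2: "R $ 2 $ 1 * (Ri $ 2 $ 2)^2 / (2 * (J $ 2 $ 1)^2) \<noteq> 0" using C(2,4) c0 by simp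
  have k3: "R $ 1 $ 1 * (Ri $ 2 $ 2)^2 / (2 * J $ 1 $ 2 * J $ 2 $ 1 ^ 3) \<noteq> 0" using C(1,4) b0 c0 by simp
  have k4: "R $ 2 $ 1 * (Ri $ 2 $ 1)^2 / (2 * J $ 1 $ 2 * J $ 2 $ 1 ^ 3) \<noteq> 0" using C(2,3) b0 c0 by simp
  note FF = F[OF k1 k2 k3 k4]
  show ?thesis unfolding Q_def[symmetric] by (rule FF)
qed

end
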